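(* For all $t,n\in\mathbb N$ we have $d(0,n)=0$ and \begin{align*} &d(4t,4n)=d(2t,2n),\quad d(4t,4n+1)=d(2t,2n),\quad d(4t,4n+2)=d(2t,2n+1),\quad d(4t,4n+3)=d(2t,2n+1),\\ &d(4t+1,4n)=d(2t,2n),\quad d(4t+1,4n+1)=d(2t+1,2n),\quad d(4t+1,4n+2)=d(2t,2n+1)+1,\quad d(4t+1,4n+3)=d(2t+1,2n+1)-1,\\ &d(4t+2,4n)=d(2t+1,2n),\quad d(4t+2,4n+1)=d(2t+1,2n)+1,\quad d(4t+2,4n+2)=d(2t+1,2n+1),\quad d(4t+2,4n+3)=d(2t+1,2n+1)-1,\\ &d(4t+3,4n)=d(2t+1,2n)+1,\quad d(4t+3,4n+1)=d(2t+2,2n),\quad d(4t+3,4n+2)=d(2t+1,2n+1),\quad d(4t+3,4n+3)=d(2t+2,2n+1)-1. \end{align*}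
   Context: For $n\in\mathbb N=\{0,1,2,\dots\}$ with binary digits $\delta_j(n)\in\{0,1\}$ ($n=\sum_j\delta_j(n)2^j$), let $\mathsf r(n)=\#\{j\ge0:\delta_{j+1}(n)=\delta_j(n)=1\}$, the number of (overlapping) occurrences of the block $\mathtt{11}$ in the binary expansion of $n$. Let $d(t,n)=\mathsf r(n+t)-\mathsf r(n)$. *)

theory Defs
  imports Main
begin

definition bdigit :: "nat \<Rightarrow> nat \<Rightarrow> nat" where
  "bdigit j n = (n div 2 ^ j) mod 2"

definition r11 :: "nat \<Rightarrow> nat" where
  "r11 n = card {j. bdigit (Suc j) n = 1 \<and> bdigit j n = 1}"

definition d :: "nat \<Rightarrow> nat \<Rightarrow> int" where
  "d t n = int (r11 (n + t)) - int (r11 n)"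

end

theory Submission
  imports Defs
begin
definition S11 :: "nat \<Rightarrow> nat set" where "S11 n = {j. bdigit (Suc j) n = 1 \<and> bdigit j n = 1}"

lemma bd0: "bdigit 0 n = n mod 2" by (simp add: bdigit_def)
lemma bdSuc: "bdigit (Suc j) n = bdigit j (n div 2)"
  by (simp add: bdigit_def div_mult2_eq mult.commute)

lemma fin: "finite (S11 n)"
proof (rule finite_subset[of _ "{..<n}"])
  show "S11 n \<subseteq> {..<n}"
  proof
    fix j assume "j \<in> S11 n"
    then have "bdigit j n = 1" by (simp add: S11_def)
    then have "n div 2^j \<noteq> 0" by (auto simp: bdigit_def)
    then have "2^j \<le> n" using div_less not_less by metis
    then show "j \<in> {..<n}" using less_exp[of j] by (meson lessThan_iff order_less_le_trans)
  qed
qed simp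

lemma split_set: "A = (if 0 \<in> A then insert 0 (Suc ` {i. Suc i \<in> A}) else Suc ` {i. Suc i \<in> A})"
proof -
  have "A = (A \<inter> {0}) \<union> Suc ` {i. Suc i \<in> A}"
  proof (rule set_eqI)
    fix x show "x \<in> A \<longleftrightarrow> x \<in> (A \<inter> {0}) \<union> Suc ` {i. Suc i \<in> A}"
      by (cases x) auto
  qed
  then show ?thesis by (cases "0 \<in> A") auto
qed

lemma S_part: "{i. Suc i \<in> S11 (2*m+b)} = S11 m" if "b < 2" for b
  using that by (simp add: S11_def bdSuc)

lemma S_even: "S11 (2*m) = Suc ` S11 m"
proof -
  have "0 \<notin> S11 (2*m)" by (simp add: S11_def bd0)
  then have "S11 (2*m) = Suc ` {i. Suc i \<in> S11 (2*m)}" using split_set[of "S11 (2*m)"] by (metis (no_types, lifting))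
  also have "{i. Suc i \<in> S11 (2*m)} = S11 m" using S_part[of 0 m] by simp
  finally show ?thesis .
qed

lemma S_odd: "S11 (2*m+1) = (if m mod 2 = 1 then insert 0 (Suc ` S11 m) else Suc ` S11 m)"
proof -
  have h: "(0 \<in> S11 (2*m+1)) = (m mod 2 = 1)" by (simp add: S11_def bdSuc bd0)
  have p: "{i. Suc i \<in> S11 (2*m+1)} = S11 m" using S_part[of 1 m] by simp
  show ?thesis
  proof (cases "m mod 2 = 1")
    case True
    then have "0 \<in> S11 (2*m+1)" using h by simp
    then show ?thesis using split_set[of "S11 (2*m+1)"] True unfolding p by (metis (no_types, lifting))
  next
    case False
    then have "0 \<notin> S11 (2*m+1)" using h by simp
    then show ?thesis using split_set[of "S11 (2*m+1)"] False unfolding p by (metis (no_types, lifting))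
  qed
qed

lemma r_even: "r11 (2*m) = r11 m"
proof -
  have "r11 (2*m) = card (S11 (2*m))" by (simp add: r11_def S11_def)
  also have "\<dots> = card (S11 m)" unfolding S_even by (simp add: card_image)
  finally show ?thesis by (simp add: r11_def S11_def)
qed

lemma r_odd: "r11 (2*m+1) = r11 m + m mod 2"
proof -
  have "r11 (2*m+1) = card (S11 (2*m+1))" by (simp add: r11_def S11_def)
  also have "\<dots> = card (S11 m) + m mod 2"
    unfolding S_odd using fin[of m] by (cases "m mod 2 = 1") (auto simp: card_image card_insert_if)
  finally show ?thesis by (simp add: r11_def S11_def)
qed

lemma r40: "r11 (4*k) = r11 (2*k)" using r_even[of "2*k"] by simp
lemma r41: "r11 (4*k+1) = r11 (2*k)" using r_odd[of "2*k"] by simp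
lemma r42: "r11 (4*k+2) = r11 (2*k+1)"
proof -
  have "4*k+2 = 2*(2*k+1)" by simp
  then show ?thesis using r_even[of "2*k+1"] by (simp only:)
qed
lemma r43: "r11 (4*k+3) = r11 (2*k+1) + 1"
proof -
  have "4*k+3 = 2*(2*k+1)+1" by simp
  moreover have "(2*k+1) mod 2 = 1" by simp
  ultimately show ?thesis using r_odd[of "2*k+1"] by (simp only:)
qed
theorem lemma3p1:
  fixes t n :: nat
  shows "d 0 n = 0
    \<and> d (4*t) (4*n) = d (2*t) (2*n)
    \<and> d (4*t) (4*n+1) = d (2*t) (2*n)
    \<and> d (4*t) (4*n+2) = d (2*t) (2*n+1)
    \<and> d (4*t) (4*n+3) = d (2*t) (2*n+1)
    \<and> d (4*t+1) (4*n) = d (2*t) (2*n)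
    \<and> d (4*t+1) (4*n+1) = d (2*t+1) (2*n)
    \<and> d (4*t+1) (4*n+2) = d (2*t) (2*n+1) + 1
    \<and> d (4*t+1) (4*n+3) = d (2*t+1) (2*n+1) - 1
    \<and> d (4*t+2) (4*n) = d (2*t+1) (2*n)
    \<and> d (4*t+2) (4*n+1) = d (2*t+1) (2*n) + 1
    \<and> d (4*t+2) (4*n+2) = d (2*t+1) (2*n+1)
    \<and> d (4*t+2) (4*n+3) = d (2*t+1) (2*n+1) - 1
    \<and> d (4*t+3) (4*n) = d (2*t+1) (2*n) + 1
    \<and> d (4*t+3) (4*n+1) = d (2*t+2) (2*n)
    \<and> d (4*t+3) (4*n+2) = d (2*t+1) (2*n+1)
    \<and> d (4*t+3) (4*n+3) = d (2*t+2) (2*n+1) - 1"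
  proof -
  have c00: "d 0 n = 0" by (simp add: d_def)
  have c0: "d (4*t) (4*n) = d (2*t) (2*n)"
  proof -
    have e0: "4*n+(4*t) = 4*(n+t)" by simp
    have e1: "2*n+(2*t) = 2*(n+t)" by simp
    show ?thesis by (simp only: d_def e0 e1 r40 r41 r42 r43; simp)
  qed
  have c1: "d (4*t) (4*n+1) = d (2*t) (2*n)"
  proof -
    have e0: "4*n+1+(4*t) = 4*(n+t)+1" by simp
    have e1: "2*n+(2*t) = 2*(n+t)" by simp
    show ?thesis by (simp only: d_def e0 e1 r40 r41 r42 r43; simp)
  qed
  have c2: "d (4*t) (4*n+2) = d (2*t) (2*n+1)"
  proof -
    have e0: "4*n+2+(4*t) = 4*(n+t)+2" by simp
    have e1: "2*n+1+(2*t) = 2*(n+t)+1" by simp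
    show ?thesis by (simp only: d_def e0 e1 r40 r41 r42 r43; simp)
  qed
  have c3: "d (4*t) (4*n+3) = d (2*t) (2*n+1)"
  proof -
    have e0: "4*n+3+(4*t) = 4*(n+t)+3" by simp
    have e1: "2*n+1+(2*t) = 2*(n+t)+1" by simp
    show ?thesis by (simp only: d_def e0 e1 r40 r41 r42 r43; simp)
  qed
  have c4: "d (4*t+1) (4*n) = d (2*t) (2*n)"
  proof -
    have e0: "4*n+(4*t+1) = 4*(n+t)+1" by simp
    have e1: "2*n+(2*t) = 2*(n+t)" by simp
    show ?thesis by (simp only: d_def e0 e1 r40 r41 r42 r43; simp)
  qed
  have c5: "d (4*t+1) (4*n+1) = d (2*t+1) (2*n)"
  proof -
    have e0: "4*n+1+(4*t+1) = 4*(n+t)+2" by simp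
    have e1: "2*n+(2*t+1) = 2*(n+t)+1" by simp
    show ?thesis by (simp only: d_def e0 e1 r40 r41 r42 r43; simp)
  qed
  have c6: "d (4*t+1) (4*n+2) = d (2*t) (2*n+1) + 1"
  proof -
    have e0: "4*n+2+(4*t+1) = 4*(n+t)+3" by simp
    have e1: "2*n+1+(2*t) = 2*(n+t)+1" by simp
    show ?thesis by (simp only: d_def e0 e1 r40 r41 r42 r43; simp)
  qed
  have c7: "d (4*t+1) (4*n+3) = d (2*t+1) (2*n+1) - 1"
  proof -
    have e0: "4*n+3+(4*t+1) = 4*(n+t+1)" by simp
    have e1: "2*n+1+(2*t+1) = 2*(n+t+1)" by simp
    show ?thesis by (simp only: d_def e0 e1 r40 r41 r42 r43; simp)
  qed
  have c8: "d (4*t+2) (4*n) = d (2*t+1) (2*n)"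
  proof -
    have e0: "4*n+(4*t+2) = 4*(n+t)+2" by simp
    have e1: "2*n+(2*t+1) = 2*(n+t)+1" by simp
    show ?thesis by (simp only: d_def e0 e1 r40 r41 r42 r43; simp)
  qed
  have c9: "d (4*t+2) (4*n+1) = d (2*t+1) (2*n) + 1"
  proof -
    have e0: "4*n+1+(4*t+2) = 4*(n+t)+3" by simp
    have e1: "2*n+(2*t+1) = 2*(n+t)+1" by simp
    show ?thesis by (simp only: d_def e0 e1 r40 r41 r42 r43; simp)
  qed
  have c10: "d (4*t+2) (4*n+2) = d (2*t+1) (2*n+1)"
  proof -
    have e0: "4*n+2+(4*t+2) = 4*(n+t+1)" by simp
    have e1: "2*n+1+(2*t+1) = 2*(n+t+1)" by simp
    show ?thesis by (simp only: d_def e0 e1 r40 r41 r42 r43; simp)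
  qed
  have c11: "d (4*t+2) (4*n+3) = d (2*t+1) (2*n+1) - 1"
  proof -
    have e0: "4*n+3+(4*t+2) = 4*(n+t+1)+1" by simp
    have e1: "2*n+1+(2*t+1) = 2*(n+t+1)" by simp
    show ?thesis by (simp only: d_def e0 e1 r40 r41 r42 r43; simp)
  qed
  have c12: "d (4*t+3) (4*n) = d (2*t+1) (2*n) + 1"
  proof -
    have e0: "4*n+(4*t+3) = 4*(n+t)+3" by simp
    have e1: "2*n+(2*t+1) = 2*(n+t)+1" by simp
    show ?thesis by (simp only: d_def e0 e1 r40 r41 r42 r43; simp)
  qed
  have c13: "d (4*t+3) (4*n+1) = d (2*t+2) (2*n)"
  proof -
    have e0: "4*n+1+(4*t+3) = 4*(n+t+1)" by simp
    have e1: "2*n+(2*t+2) = 2*(n+t+1)" by simp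
    show ?thesis by (simp only: d_def e0 e1 r40 r41 r42 r43; simp)
  qed
  have c14: "d (4*t+3) (4*n+2) = d (2*t+1) (2*n+1)"
  proof -
    have e0: "4*n+2+(4*t+3) = 4*(n+t+1)+1" by simp
    have e1: "2*n+1+(2*t+1) = 2*(n+t+1)" by simp
    show ?thesis by (simp only: d_def e0 e1 r40 r41 r42 r43; simp)
  qed
  have c15: "d (4*t+3) (4*n+3) = d (2*t+2) (2*n+1) - 1"
  proof -
    have e0: "4*n+3+(4*t+3) = 4*(n+t+1)+2" by simp
    have e1: "2*n+1+(2*t+2) = 2*(n+t+1)+1" by simp
    show ?thesis by (simp only: d_def e0 e1 r40 r41 r42 r43; simp)
  qed
  show ?thesis using c00 c0 c1 c2 c3 c4 c5 c6 c7 c8 c9 c10 c11 c12 c13 c14 c15 by blast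
qed

end
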